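(* Let $\Bbbk$ be a field, $n\ge2$, $q\in\Bbbk$ a primitive $n$-th root of unity, $T_n(q)$ the Taft algebra and $A$ a unital associative $\Bbbk$-algebra. Let $\cdot:T_n(q)\otimes A\to A$ be a partial action of $T_n(q)$ on $A$ with $g\cdot1_A=0$. Then for all $a\in A$ and $0\le i,j\le n-1$, $$g^ix^j\cdot a=q^{-ij}\sum_{k=0}^{j}(-1)^kq^{-\frac{k(k-1)}{2}}\binom{j}{k}_{q^{-1}}(x\cdot1_A)^{j-k}(g^{i+k}\cdot a)(x\cdot1_A)^k.$$
   Context: The Taft algebra $T_n(q)$ is the Hopf algebra generated by $g,x$ with relations $g^n=1$, $x^n=0$, $xg=qgx$, basis $\{g^ix^j:0\le i,j<n\}$, $g$ group-like, $\Delta(x)=x\otimes1+g\otimes x$, $\varepsilon(x)=0$; exponents of $g$ are read modulo $n$. A partial action of a bialgebra $H$ on $A$ is a linear map $\cdot:H\otimes A\to A$ with $1_H\cdot a=a$, $h\cdot(ab)=(h_1\cdot a)(h_2\cdot b)$, $h\cdot(k\cdot a)=(h_1\cdot1_A)(h_2k\cdot a)$. $q$-binomials: $\binom{0}{0}_p=1$, $\binom{N}{m}_p=0$ if $m>N$ or $m<0$, and $\binom{N}{m}_p=\binom{N-1}{m-1}_p+p^m\binom{N-1}{m}_p$ for $N\ge1$, $0\le m\le N$. *)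

theory Defs
  imports Main
begin

fun qbinom :: "'k::comm_ring_1 \<Rightarrow> nat \<Rightarrow> nat \<Rightarrow> 'k" where
  "qbinom p 0 m = (if m = 0 then 1 else 0)"
| "qbinom p (Suc N) 0 = qbinom p N 0"
| "qbinom p (Suc N) (Suc m) = qbinom p N m + p ^ Suc m * qbinom p N (Suc m)"

definition primitive_root :: "'k::field \<Rightarrow> nat \<Rightarrow> bool" where
  "primitive_root q n \<longleftrightarrow> q ^ n = 1 \<and> (\<forall>m. 0 < m \<and> m < n \<longrightarrow> q ^ m \<noteq> 1)"

text \<open>An element of T_n(q) is a coefficient function on index pairs (i,j),
  only pairs in taft_basis n matter; (i,j) stands for g^i x^j.\<close>

definition taft_basis :: "nat \<Rightarrow> (nat \<times> nat) set" where
  "taft_basis n = {..<n} \<times> {..<n}"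

text \<open>Structure constants: (g^i x^j)(g^k x^l) = q^(jk) g^((i+k) mod n) x^(j+l),
  which is 0 if j+l >= n (from xg = qgx, g^n = 1, x^n = 0).\<close>
definition taft_sc :: "nat \<Rightarrow> 'k::field \<Rightarrow> nat \<times> nat \<Rightarrow> nat \<times> nat \<Rightarrow> nat \<times> nat \<Rightarrow> 'k" where
  "taft_sc n q u v w =
     (if (fst u + fst v) mod n = fst w \<and> snd u + snd v = snd w \<and> snd w < n
      then q ^ (snd u * fst v) else 0)"

definition taft_mult :: "nat \<Rightarrow> 'k::field \<Rightarrow> (nat \<times> nat \<Rightarrow> 'k) \<Rightarrow> (nat \<times> nat \<Rightarrow> 'k) \<Rightarrow> (nat \<times> nat \<Rightarrow> 'k)" where
  "taft_mult n q a b = (\<lambda>w. \<Sum>u\<in>taft_basis n. \<Sum>v\<in>taft_basis n. a u * b v * taft_sc n q u v w)"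

definition taft_elem :: "nat \<times> nat \<Rightarrow> nat \<times> nat \<Rightarrow> 'k::field" where
  "taft_elem u = (\<lambda>v. if v = u then 1 else 0)"

text \<open>T_n(q) \<otimes> T_n(q): coefficient functions on pairs of index pairs, with the
  tensor product algebra structure (a\<otimes>b)(c\<otimes>d) = ac \<otimes> bd.\<close>

definition taft2_mult :: "nat \<Rightarrow> 'k::field \<Rightarrow> ((nat \<times> nat) \<times> (nat \<times> nat) \<Rightarrow> 'k)
    \<Rightarrow> ((nat \<times> nat) \<times> (nat \<times> nat) \<Rightarrow> 'k) \<Rightarrow> ((nat \<times> nat) \<times> (nat \<times> nat) \<Rightarrow> 'k)" where
  "taft2_mult n q S T = (\<lambda>(w, w').
     \<Sum>u\<in>taft_basis n. \<Sum>u'\<in>taft_basis n. \<Sum>v\<in>taft_basis n. \<Sum>v'\<in>taft_basis n.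
       S (u, u') * T (v, v') * taft_sc n q u v w * taft_sc n q u' v' w')"

definition taft2_elem :: "nat \<times> nat \<Rightarrow> nat \<times> nat \<Rightarrow> (nat \<times> nat) \<times> (nat \<times> nat) \<Rightarrow> 'k::field" where
  "taft2_elem u u' = (\<lambda>z. if z = (u, u') then 1 else 0)"

definition taft2_one :: "(nat \<times> nat) \<times> (nat \<times> nat) \<Rightarrow> 'k::field" where
  "taft2_one = taft2_elem (0, 0) (0, 0)"

text \<open>Delta(g) = g \<otimes> g, Delta(x) = x \<otimes> 1 + g \<otimes> x\<close>
definition Delta_g :: "(nat \<times> nat) \<times> (nat \<times> nat) \<Rightarrow> 'k::field" where
  "Delta_g = taft2_elem (1, 0) (1, 0)"

definition Delta_x :: "(nat \<times> nat) \<times> (nat \<times> nat) \<Rightarrow> 'k::field" where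
  "Delta_x = (\<lambda>z. taft2_elem (0, 1) (0, 0) z + taft2_elem (1, 0) (0, 1) z)"

text \<open>Delta is an algebra map: Delta(g^i x^j) = Delta(g)^i Delta(x)^j.\<close>
definition taft_comult :: "nat \<Rightarrow> 'k::field \<Rightarrow> nat \<times> nat \<Rightarrow> (nat \<times> nat) \<times> (nat \<times> nat) \<Rightarrow> 'k" where
  "taft_comult n q u =
     taft2_mult n q ((taft2_mult n q Delta_g ^^ fst u) taft2_one)
                    ((taft2_mult n q Delta_x ^^ snd u) taft2_one)"

definition k_algebra :: "('k::field \<Rightarrow> 'a::{ring, monoid_mult} \<Rightarrow> 'a) \<Rightarrow> bool" where
  "k_algebra smult \<longleftrightarrow>
     (\<forall>c a b. smult c (a + b) = smult c a + smult c b) \<and>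
     (\<forall>c d a. smult (c + d) a = smult c a + smult d a) \<and>
     (\<forall>c d a. smult (c * d) a = smult c (smult d a)) \<and>
     (\<forall>a. smult 1 a = a) \<and>
     (\<forall>c a b. smult c (a * b) = smult c a * b) \<and>
     (\<forall>c a b. smult c (a * b) = a * smult c b)"

text \<open>A linear map T_n(q) \<otimes> A \<rightarrow> A is given by its values act (i,j) a = g^i x^j \<cdot> a
  on basis elements, each k-linear in a; the value on a general h is obtained
  by linear extension.\<close>

definition taft_act_ext :: "nat \<Rightarrow> ('k::field \<Rightarrow> 'a::{ring, monoid_mult} \<Rightarrow> 'a)
    \<Rightarrow> (nat \<times> nat \<Rightarrow> 'a \<Rightarrow> 'a) \<Rightarrow> (nat \<times> nat \<Rightarrow> 'k) \<Rightarrow> 'a \<Rightarrow> 'a" where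
  "taft_act_ext n smult act h a = (\<Sum>u\<in>taft_basis n. smult (h u) (act u a))"

text \<open>The axioms are checked on basis elements h, k (both sides are linear in h and k).\<close>
definition taft_partial_action :: "nat \<Rightarrow> 'k::field \<Rightarrow> ('k \<Rightarrow> 'a::{ring, monoid_mult} \<Rightarrow> 'a)
    \<Rightarrow> (nat \<times> nat \<Rightarrow> 'a \<Rightarrow> 'a) \<Rightarrow> bool" where
  "taft_partial_action n q smult act \<longleftrightarrow>
     (\<forall>u\<in>taft_basis n. \<forall>a b. act u (a + b) = act u a + act u b) \<and>
     (\<forall>u\<in>taft_basis n. \<forall>c a. act u (smult c a) = smult c (act u a)) \<and>
     (\<forall>a. act (0, 0) a = a) \<and>
     (\<forall>u\<in>taft_basis n. \<forall>a b.
        act u (a * b) =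
          (\<Sum>v\<in>taft_basis n. \<Sum>v'\<in>taft_basis n.
             smult (taft_comult n q u (v, v')) (act v a * act v' b))) \<and>
     (\<forall>u\<in>taft_basis n. \<forall>w\<in>taft_basis n. \<forall>a.
        act u (act w a) =
          (\<Sum>v\<in>taft_basis n. \<Sum>v'\<in>taft_basis n.
             smult (taft_comult n q u (v, v'))
               (act v 1 * taft_act_ext n smult act (taft_mult n q (taft_elem v') (taft_elem w)) a)))"

end

theory Submission
  imports Defs
begin

lemma qbinom_0_right[simp]: "qbinom p N 0 = 1"
  by (induction N) auto

lemma qbinom_gt[simp]: "N < m \<Longrightarrow> qbinom p N m = 0"
proof (induction N arbitrary: m)
  case 0 then show ?case by simp
next
  case (Suc N) then show ?case by (cases m) auto
qed

lemma qbinom_self[simp]: "qbinom p N N = 1"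
  by (induction N) auto

lemma qbinom_pascal2:
  "m \<le> N \<Longrightarrow> qbinom p (Suc N) (Suc m) = p ^ (N - m) * qbinom p N m + qbinom p N (Suc m)"
proof (induction N arbitrary: m)
  case 0 then show ?case by simp
next
  case (Suc N)
  show ?case
  proof (cases m)
    case 0
    have ih: "qbinom p (Suc N) 1 = p ^ N + qbinom p N 1" using Suc.IH[of 0] by simp
    have d: "qbinom p (Suc N) 1 = 1 + p * qbinom p N 1" by simp
    show ?thesis using 0 ih d by (simp add: algebra_simps)
  next
    case (Suc m')
    have m': "m' \<le> N" using Suc.prems Suc by simp
    have ih1: "qbinom p (Suc N) (Suc m') = p ^ (N - m') * qbinom p N m' + qbinom p N (Suc m')"
      using Suc.IH[OF m'] .
    have ih2: "p ^ Suc (Suc m') * qbinom p (Suc N) (Suc (Suc m')) = p ^ Suc N * qbinom p N (Suc m') + p ^ Suc (Suc m') * qbinom p N (Suc (Suc m'))"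
    proof (cases "m' = N")
      case True then show ?thesis by simp
    next
      case False
      then have "Suc m' \<le> N" using m' by simp
      from Suc.IH[OF this] have "qbinom p (Suc N) (Suc (Suc m')) = p ^ (N - Suc m') * qbinom p N (Suc m') + qbinom p N (Suc (Suc m'))" .
      moreover have "p ^ Suc (Suc m') * p ^ (N - Suc m') = p ^ Suc N"
      proof -
        have "Suc (Suc m') + (N - Suc m') = Suc N" using \<open>Suc m' \<le> N\<close> by simp
        then show ?thesis by (metis power_add)
      qed
      ultimately show ?thesis by (simp add: algebra_simps)
    qed
    have e: "p ^ (N - m') * p ^ Suc m' = p ^ Suc N"
    proof -
      have "(N - m') + Suc m' = Suc N" using m' by simp
      then show ?thesis by (metis power_add)
    qed
    have "qbinom p (Suc (Suc N)) (Suc m) = qbinom p (Suc N) (Suc m') + p ^ Suc (Suc m') * qbinom p (Suc N) (Suc (Suc m'))"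
      using Suc by simp
    also have "\<dots> = p ^ (N - m') * qbinom p N m' + qbinom p N (Suc m') + (p ^ Suc N * qbinom p N (Suc m') + p ^ Suc (Suc m') * qbinom p N (Suc (Suc m')))"
      using ih1 ih2 by simp
    also have "\<dots> = p ^ (N - m') * (qbinom p N m' + p ^ Suc m' * qbinom p N (Suc m')) + (qbinom p N (Suc m') + p ^ Suc (Suc m') * qbinom p N (Suc (Suc m')))"
    proof -
      have "p ^ (N - m') * (qbinom p N m' + p ^ Suc m' * qbinom p N (Suc m')) = p ^ (N - m') * qbinom p N m' + p ^ Suc N * qbinom p N (Suc m')"
        by (simp only: distrib_left mult.assoc[symmetric] e)
      then show ?thesis by (simp only: add_ac)
    qed
    also have "\<dots> = p ^ (Suc N - m) * qbinom p (Suc N) m + qbinom p (Suc N) (Suc m)"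
      using Suc by simp
    finally show ?thesis .
  qed
qed

lemma fin_B[simp]: "finite (taft_basis n)"
  by (simp add: taft_basis_def)

lemma mem_B[simp]: "(u \<in> taft_basis n) = (fst u < n \<and> snd u < n)"
  by (cases u) (simp add: taft_basis_def)

lemma sc_eval: "taft_sc n q u v w =
  (if w = ((fst u + fst v) mod n, snd u + snd v) \<and> snd u + snd v < n then q ^ (snd u * fst v) else 0)"
  by (cases w) (auto simp: taft_sc_def)

lemma sum_delta_l: "finite S \<Longrightarrow> (\<Sum>x\<in>S. (if x = a then 1 else 0) * f x) = (if a \<in> S then f a else (0::'k::comm_ring_1))"
proof -
  assume f: "finite S"
  have "(\<Sum>x\<in>S. (if x = a then 1 else 0) * f x) = (\<Sum>x\<in>S. if x = a then f x else 0)"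
    by (rule sum.cong) auto
  then show ?thesis using f by simp
qed

lemma taft2_mult_elem:
  assumes "u \<in> taft_basis n" "u' \<in> taft_basis n" "v \<in> taft_basis n" "v' \<in> taft_basis n"
  shows "taft2_mult n q (taft2_elem u u') (taft2_elem v v') (w, w') = taft_sc n q u v w * taft_sc n q u' v' w'"
proof -
  have "taft2_mult n q (taft2_elem u u') (taft2_elem v v') (w, w') =
    (\<Sum>x\<in>taft_basis n. (if x = u then 1 else 0) * (\<Sum>x'\<in>taft_basis n. (if x' = u' then 1 else 0) *
      (\<Sum>y\<in>taft_basis n. (if y = v then 1 else 0) * (\<Sum>y'\<in>taft_basis n. (if y' = v' then 1 else 0) *
        (taft_sc n q x y w * taft_sc n q x' y' w')))))"
    unfolding taft2_mult_def taft2_elem_def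
    by (auto simp: sum_distrib_left intro!: sum.cong)
  also have "\<dots> = taft_sc n q u v w * taft_sc n q u' v' w'"
    using assms by (simp only: sum_delta_l fin_B if_True)
  finally show ?thesis .
qed

lemma taft2_mult_add_right:
  "taft2_mult n q S (\<lambda>z. T1 z + T2 z) = (\<lambda>z. taft2_mult n q S T1 z + taft2_mult n q S T2 z)"
  unfolding taft2_mult_def
  by (auto simp: distrib_left distrib_right sum.distrib)

lemma taft2_mult_add_left:
  "taft2_mult n q (\<lambda>z. T1 z + T2 z) S = (\<lambda>z. taft2_mult n q T1 S z + taft2_mult n q T2 S z)"
  unfolding taft2_mult_def
  by (auto simp: distrib_left distrib_right sum.distrib)

lemma Delta_g_pow:
  assumes "n \<ge> 2"
  shows "(taft2_mult n q Delta_g ^^ m) taft2_one = taft2_elem (m mod n, 0) (m mod n, 0)"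
proof (induction m)
  case 0 then show ?case by (simp add: taft2_one_def)
next
  case (Suc m)
  have "(taft2_mult n q Delta_g ^^ Suc m) taft2_one = taft2_mult n q (taft2_elem (1,0) (1,0)) (taft2_elem (m mod n, 0) (m mod n, 0))"
    using Suc by (simp add: Delta_g_def)
  also have "\<dots> = taft2_elem (Suc m mod n, 0) (Suc m mod n, 0)"
  proof (rule ext, clarify)
    fix w w' :: "nat \<times> nat"
    have n0: "0 < n" using assms by simp
    have e: "Suc (m mod n) mod n = Suc m mod n" by (simp add: mod_Suc_eq)
    show "taft2_mult n q (taft2_elem (1, 0) (1, 0)) (taft2_elem (m mod n, 0) (m mod n, 0)) (w, w') =
         taft2_elem (Suc m mod n, 0) (Suc m mod n, 0) (w, w')"
      using assms n0 apply (simp add: taft2_mult_elem)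
      by (auto simp: sc_eval e taft2_elem_def)
  qed
  finally show ?case .
qed

lemma Delta_x_1:
  assumes "n \<ge> 2"
  shows "taft2_mult n q Delta_x taft2_one = Delta_x"
proof (rule ext, clarify)
  fix w w' :: "nat \<times> nat"
  show "taft2_mult n q Delta_x taft2_one (w, w') = Delta_x (w, w')"
    using assms
    apply (simp add: Delta_x_def taft2_mult_add_left taft2_one_def taft2_mult_elem)
    by (auto simp: sc_eval taft2_elem_def)
qed

lemma comult_g:
  assumes "n \<ge> 2" "a < n"
  shows "taft_comult n q (a, 0) = taft2_elem (a, 0) (a, 0)"
proof (rule ext, clarify)
  fix w w' :: "nat \<times> nat"
  show "taft_comult n q (a, 0) (w, w') = taft2_elem (a, 0) (a, 0) (w, w')"
    using assms
    apply (simp add: taft_comult_def Delta_g_pow)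
    apply (simp add: taft2_one_def taft2_mult_elem)
    by (auto simp: sc_eval taft2_elem_def)
qed

lemma comult_gix:
  assumes "n \<ge> 2"
  shows "taft_comult n q (n - 1, 1) = (\<lambda>z. taft2_elem (n - 1, 1) (n - 1, 0) z + taft2_elem (0, 0) (n - 1, 1) z)"
proof (rule ext, clarify)
  fix w w' :: "nat \<times> nat"
  show "taft_comult n q (n - 1, 1) (w, w') = taft2_elem (n - 1, 1) (n - 1, 0) (w, w') + taft2_elem (0, 0) (n - 1, 1) (w, w')"
    using assms
    apply (simp add: taft_comult_def Delta_g_pow Delta_x_1)
    apply (simp add: Delta_x_def taft2_mult_add_right taft2_mult_elem)
    by (auto simp: sc_eval taft2_elem_def)
qed

definition alpha :: "'k::field \<Rightarrow> nat \<Rightarrow> nat \<Rightarrow> 'k" where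
  "alpha p j k = (-1) ^ k * p ^ (k * (k - 1) div 2) * qbinom p j k"

lemma tri_suc: "Suc m * m div 2 = m * (m - 1) div 2 + m"
proof (cases m)
  case 0 then show ?thesis by simp
next
  case (Suc m')
  have "Suc m * m = Suc m' * m' + 2 * Suc m'" using Suc by (simp add: algebra_simps)
  then show ?thesis using Suc by simp
qed

lemma alpha_0[simp]: "alpha p j 0 = 1" by (simp add: alpha_def)

lemma alpha_gt[simp]: "j < k \<Longrightarrow> alpha p j k = 0" by (simp add: alpha_def)

lemma alpha_rec:
  assumes "m \<le> j"
  shows "alpha p (Suc j) (Suc m) = alpha p j (Suc m) - p ^ j * alpha p j m"
proof -
  have e: "p ^ (Suc m * m div 2) * p ^ (j - m) = p ^ (m * (m - 1) div 2) * p ^ j"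
  proof -
    have "Suc m * m div 2 + (j - m) = m * (m - 1) div 2 + j" using assms tri_suc[of m] by simp
    then show ?thesis by (metis power_add)
  qed
  have "alpha p (Suc j) (Suc m) = (-1) ^ Suc m * p ^ (Suc m * m div 2) * (p ^ (j - m) * qbinom p j m + qbinom p j (Suc m))"
    by (simp only: alpha_def qbinom_pascal2[OF assms] diff_Suc_1)
  also have "\<dots> = (-1) ^ Suc m * (p ^ (Suc m * m div 2) * p ^ (j - m)) * qbinom p j m + alpha p j (Suc m)"
    by (simp only: alpha_def diff_Suc_1 ring_distribs mult_ac)
  also have "\<dots> = alpha p j (Suc m) - p ^ j * alpha p j m"
    unfolding e by (simp add: alpha_def ring_distribs mult_ac)
  finally show ?thesis .
qed

lemma pow_mod:
  fixes p :: "'k::comm_ring_1"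
  assumes pn: "p ^ n = 1"
  shows "p ^ (m mod n) = p ^ m"
proof -
  have "p ^ m = p ^ (n * (m div n) + m mod n)" by simp
  also have "\<dots> = (p ^ n) ^ (m div n) * p ^ (m mod n)" by (simp only: power_add power_mult)
  finally show ?thesis using pn by simp
qed

context
  fixes smult :: "'k::field \<Rightarrow> 'a::{ring, monoid_mult} \<Rightarrow> 'a"
  assumes ka: "k_algebra smult"
begin

lemma ka_add: "smult c (x + y) = smult c x + smult c y" using ka unfolding k_algebra_def by metis
lemma ka_sadd: "smult (c + d) x = smult c x + smult d x" using ka unfolding k_algebra_def by metis
lemma ka_smult: "smult c (smult d x) = smult (c * d) x" using ka unfolding k_algebra_def by metis
lemma ka_one: "smult 1 x = x" using ka unfolding k_algebra_def by metis
lemma ka_ml: "smult c x * y = smult c (x * y)" using ka unfolding k_algebra_def by metis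
lemma ka_mr: "x * smult c y = smult c (x * y)" using ka unfolding k_algebra_def by metis

lemma ka_szero: "smult 0 x = 0"
proof -
  have "smult (0 + 0) x = smult 0 x + smult 0 x" by (rule ka_sadd)
  then show ?thesis by simp
qed

lemma ka_zero: "smult c 0 = 0"
proof -
  have "smult c (0 + 0) = smult c 0 + smult c 0" by (rule ka_add)
  then show ?thesis by simp
qed

lemma ka_neg: "smult c (- x) = - smult c x"
proof -
  have "smult c (x + - x) = smult c x + smult c (- x)" by (rule ka_add)
  then have "smult c x + smult c (- x) = 0" by (simp add: ka_zero)
  then show ?thesis by (simp add: add_eq_0_iff)
qed

lemma ka_diff: "smult c (x - y) = smult c x - smult c y"
  by (simp only: diff_conv_add_uminus ka_add ka_neg)

lemma ka_sdiff: "smult (c - d) x = smult c x - smult d x"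
proof -
  have "smult (c - d + d) x = smult (c - d) x + smult d x" by (rule ka_sadd)
  then show ?thesis by (simp add: eq_diff_eq)
qed

lemma ka_sum: "smult c (sum f S) = (\<Sum>x\<in>S. smult c (f x))"
proof (cases "finite S")
  case True then show ?thesis
    by (induction S rule: finite_induct) (simp_all add: ka_zero ka_add)
next
  case False then show ?thesis by (simp add: ka_zero)
qed

lemma step_alg:
  fixes X :: 'a and A :: "nat \<Rightarrow> 'a" and p :: 'k
  assumes pn: "p ^ n = 1" and n0: "0 < n"
  shows "smult (p ^ i) (X * smult (p ^ (i * j)) (\<Sum>k\<le>j. smult (alpha p j k) (X ^ (j - k) * A ((i + k) mod n) * X ^ k))
      - smult (p ^ (((i + 1) mod n) * j)) (\<Sum>k\<le>j. smult (alpha p j k) (X ^ (j - k) * A (((i + 1) mod n + k) mod n) * X ^ k)) * X)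
    = smult (p ^ (i * Suc j)) (\<Sum>k\<le>Suc j. smult (alpha p (Suc j) k) (X ^ (Suc j - k) * A ((i + k) mod n) * X ^ k))"
proof -
  define T where "T k = X ^ (Suc j - k) * A ((i + k) mod n) * X ^ k" for k
  define c1 where "c1 = p ^ (i * j)"
  define c2 where "c2 = p ^ (((i + 1) mod n) * j)"
  have c2e: "c2 = p ^ (i * j) * p ^ j"
  proof -
    have "p ^ (((i + 1) mod n) * j) = p ^ ((i + 1) * j)"
      using pow_mod[OF pn, of "i+1"] by (simp only: power_mult)
    then show ?thesis unfolding c2_def by (simp add: algebra_simps power_add)
  qed
  define beta where "beta k = (case k of 0 \<Rightarrow> 0 | Suc m \<Rightarrow> c2 * alpha p j m)" for k
  have S1: "X * smult c1 (\<Sum>k\<le>j. smult (alpha p j k) (X ^ (j - k) * A ((i + k) mod n) * X ^ k))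
     = (\<Sum>k\<le>Suc j. smult (c1 * alpha p j k) (T k))"
  proof -
    have "X * smult c1 (\<Sum>k\<le>j. smult (alpha p j k) (X ^ (j - k) * A ((i + k) mod n) * X ^ k))
      = (\<Sum>k\<le>j. smult (c1 * alpha p j k) (T k))"
      unfolding ka_mr ka_sum sum_distrib_left
      by (rule sum.cong) (auto simp: ka_smult ka_mr T_def Suc_diff_le mult.assoc)
    then show ?thesis by (simp add: ka_szero)
  qed
  have S2: "smult c2 (\<Sum>k\<le>j. smult (alpha p j k) (X ^ (j - k) * A (((i + 1) mod n + k) mod n) * X ^ k)) * X
     = (\<Sum>k\<le>Suc j. smult (beta k) (T k))"
  proof -
    have "smult c2 (\<Sum>k\<le>j. smult (alpha p j k) (X ^ (j - k) * A (((i + 1) mod n + k) mod n) * X ^ k)) * X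
      = (\<Sum>k\<le>j. smult (beta (Suc k)) (T (Suc k)))"
      unfolding ka_ml ka_sum sum_distrib_right
      by (rule sum.cong) (auto simp: ka_smult ka_ml T_def beta_def mult.assoc mod_add_left_eq power_commutes)
    then show ?thesis by (simp only: sum.atMost_Suc_shift) (simp add: beta_def ka_szero)
  qed
  have "smult (p ^ i) (X * smult c1 (\<Sum>k\<le>j. smult (alpha p j k) (X ^ (j - k) * A ((i + k) mod n) * X ^ k))
      - smult c2 (\<Sum>k\<le>j. smult (alpha p j k) (X ^ (j - k) * A (((i + 1) mod n + k) mod n) * X ^ k)) * X)
    = (\<Sum>k\<le>Suc j. smult (p ^ i * (c1 * alpha p j k - beta k)) (T k))"
    apply (simp only: S1 S2 flip: sum_subtractf)
    apply (simp only: ka_sum)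
    by (rule sum.cong) (auto simp: ka_smult ka_sdiff ka_diff right_diff_distrib mult.assoc)
  also have "\<dots> = (\<Sum>k\<le>Suc j. smult (p ^ (i * Suc j) * alpha p (Suc j) k) (T k))"
  proof (rule sum.cong)
    fix k assume k: "k \<in> {..Suc j}"
    have "p ^ i * (c1 * alpha p j k - beta k) = p ^ (i * Suc j) * alpha p (Suc j) k"
    proof (cases k)
      case 0 then show ?thesis by (simp add: beta_def c1_def power_add algebra_simps)
    next
      case (Suc m)
      then have m: "m \<le> j" using k by simp
      show ?thesis using Suc by (simp add: beta_def c1_def c2e alpha_rec[OF m] power_add algebra_simps)
    qed
    then show "smult (p ^ i * (c1 * alpha p j k - beta k)) (T k) = smult (p ^ (i * Suc j) * alpha p (Suc j) k) (T k)" by simp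
  qed simp
  also have "\<dots> = smult (p ^ (i * Suc j)) (\<Sum>k\<le>Suc j. smult (alpha p (Suc j) k) (X ^ (Suc j - k) * A ((i + k) mod n) * X ^ k))"
    by (simp only: ka_sum ka_smult T_def)
  finally show ?thesis unfolding c1_def c2_def .
qed

end

lemma taft_mult_elem:
  assumes "v \<in> taft_basis n" "w \<in> taft_basis n"
  shows "taft_mult n q (taft_elem v) (taft_elem w) = (\<lambda>z. taft_sc n q v w z)"
proof (rule ext)
  fix z
  have "taft_mult n q (taft_elem v) (taft_elem w) z =
    (\<Sum>x\<in>taft_basis n. (if x = v then 1 else 0) * (\<Sum>y\<in>taft_basis n. (if y = w then 1 else 0) * taft_sc n q x y z))"
    unfolding taft_mult_def taft_elem_def
    by (auto simp: sum_distrib_left intro!: sum.cong)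
  also have "\<dots> = taft_sc n q v w z"
    using assms by (simp only: sum_delta_l fin_B if_True)
  finally show "taft_mult n q (taft_elem v) (taft_elem w) z = taft_sc n q v w z" .
qed

context
  fixes smult :: "'k::field \<Rightarrow> 'a::{ring, monoid_mult} \<Rightarrow> 'a"
  assumes ka: "k_algebra smult"
begin

lemma ext_sc:
  assumes "0 < n"
  shows "taft_act_ext n smult act (\<lambda>z. taft_sc n q v w z) a =
    (if snd v + snd w < n then smult (q ^ (snd v * fst w)) (act ((fst v + fst w) mod n, snd v + snd w) a) else 0)"
proof -
  let ?t = "((fst v + fst w) mod n, snd v + snd w)"
  have "taft_act_ext n smult act (\<lambda>z. taft_sc n q v w z) a =
     (\<Sum>u\<in>taft_basis n. if u = ?t then (if snd v + snd w < n then smult (q ^ (snd v * fst w)) (act u a) else 0) else 0)"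
    unfolding taft_act_ext_def sc_eval
    by (rule sum.cong) (auto simp: ka_szero[OF ka])
  also have "\<dots> = (if snd v + snd w < n then smult (q ^ (snd v * fst w)) (act ?t a) else 0)"
    using assms by simp
  finally show ?thesis .
qed

lemma smult_ind: "smult (if P then 1 else 0) x = (if P then x else 0)"
  by (simp add: ka_one[OF ka] ka_szero[OF ka])

lemma sum2_elem:
  assumes "a \<in> taft_basis n" "b \<in> taft_basis n"
  shows "(\<Sum>v\<in>taft_basis n. \<Sum>v'\<in>taft_basis n. smult (taft2_elem a b (v, v')) (f v v')) = f a b"
proof -
  have "(\<Sum>v\<in>taft_basis n. \<Sum>v'\<in>taft_basis n. smult (taft2_elem a b (v, v')) (f v v'))
     = (\<Sum>v\<in>taft_basis n. if v = a then (\<Sum>v'\<in>taft_basis n. if v' = b then f v v' else 0) else 0)"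
    by (rule sum.cong) (auto simp: taft2_elem_def smult_ind ka_szero[OF ka] intro!: sum.cong)
  also have "\<dots> = f a b" using assms by simp
  finally show ?thesis .
qed

lemma sum2_elem2:
  assumes "a \<in> taft_basis n" "b \<in> taft_basis n" "c \<in> taft_basis n" "d \<in> taft_basis n"
  shows "(\<Sum>v\<in>taft_basis n. \<Sum>v'\<in>taft_basis n. smult (taft2_elem a b (v, v') + taft2_elem c d (v, v')) (f v v')) = f a b + f c d"
  by (simp only: ka_sadd[OF ka] sum.distrib sum2_elem[OF assms(1,2)] sum2_elem[OF assms(3,4)])

end

lemma modlem: "(i::nat) < n \<Longrightarrow> (n - 1 + (i + 1) mod n) mod n = i"
proof (cases "i + 1 < n")
  case True
  assume "i < n"
  then have "n - 1 + (i + 1) = n + i" by arith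
  then show ?thesis using True by simp
next
  case False
  assume "i < n"
  then have "i + 1 = n" using False by simp
  then show ?thesis by simp
qed

lemma modlem2: "(i::nat) < n \<Longrightarrow> (n + Suc i mod n - Suc 0) mod n = i"
proof -
  assume i: "i < n"
  have "n + Suc i mod n - Suc 0 = n - 1 + (i + 1) mod n" using i by simp
  then show ?thesis using modlem[OF i] by simp
qed

theorem proposition3p3:
  fixes q :: "'k::field" and n :: nat
    and smult :: "'k \<Rightarrow> 'a::{ring, monoid_mult} \<Rightarrow> 'a"
    and act :: "nat \<times> nat \<Rightarrow> 'a \<Rightarrow> 'a"
  assumes "n \<ge> 2"
    and "primitive_root q n"
    and "k_algebra smult"
    and "taft_partial_action n q smult act"
    and "act (1, 0) 1 = 0"
    and "i < n" and "j < n"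
  shows "act (i, j) a =
    smult (inverse q ^ (i * j))
      (\<Sum>k\<le>j. smult ((- 1) ^ k * inverse q ^ (k * (k - 1) div 2) * qbinom (inverse q) j k)
                   (act (0, 1) 1 ^ (j - k) * act ((i + k) mod n, 0) a * act (0, 1) 1 ^ k))"
proof -
  note ka = assms(3)
  have n0: "0 < n" and n1: "1 < n" using assms(1) by auto
  have PA_add: "\<And>u x y. u \<in> taft_basis n \<Longrightarrow> act u (x + y) = act u x + act u y"
    using assms(4) unfolding taft_partial_action_def by blast
  have PA_00: "\<And>x. act (0, 0) x = x"
    using assms(4) unfolding taft_partial_action_def by blast
  have PA_mul: "\<And>u x y. u \<in> taft_basis n \<Longrightarrow> act u (x * y) =
          (\<Sum>v\<in>taft_basis n. \<Sum>v'\<in>taft_basis n.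
             smult (taft_comult n q u (v, v')) (act v x * act v' y))"
    using assms(4) unfolding taft_partial_action_def by blast
  have PA_comp: "\<And>u w x. u \<in> taft_basis n \<Longrightarrow> w \<in> taft_basis n \<Longrightarrow>
        act u (act w x) =
          (\<Sum>v\<in>taft_basis n. \<Sum>v'\<in>taft_basis n.
             smult (taft_comult n q u (v, v'))
               (act v 1 * taft_act_ext n smult act (taft_mult n q (taft_elem v') (taft_elem w)) x))"
    using assms(4) unfolding taft_partial_action_def by blast
  have act0: "\<And>u. u \<in> taft_basis n \<Longrightarrow> act u 0 = 0"
  proof -
    fix u :: "nat \<times> nat" assume u: "u \<in> taft_basis n"
    have "act u (0 + 0) = act u 0 + act u 0" using PA_add[OF u] .
    then show "act u 0 = 0" by simp
  qed
  have qn: "q ^ n = 1" using assms(2) unfolding primitive_root_def by simp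
  have q0: "q \<noteq> 0" using qn n0 by (auto simp: power_0_left)
  define p where "p = inverse q"
  have pn: "p ^ n = 1" using qn by (simp add: p_def power_inverse)
  define X where "X = act (0, 1) 1"
  have g_zero: "\<And>b. act (1, 0) b = 0"
  proof -
    fix b
    have "act (1, 0) (b * 1) = (\<Sum>v\<in>taft_basis n. \<Sum>v'\<in>taft_basis n.
             smult (taft_comult n q (1, 0) (v, v')) (act v b * act v' 1))"
      using PA_mul[of "(1, 0)" b 1] n1 by simp
    also have "\<dots> = act (1, 0) b * act (1, 0) 1"
      using n1 by (simp only: comult_g[OF assms(1) n1]) (simp add: sum2_elem[OF ka])
    finally show "act (1, 0) b = 0" using assms(5) by simp
  qed
  have gi_one: "act (n - 1, 0) 1 = 0"
  proof -
    have "act (n - 1, 0) (act (1, 0) 1) = (\<Sum>v\<in>taft_basis n. \<Sum>v'\<in>taft_basis n.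
             smult (taft_comult n q (n - 1, 0) (v, v'))
               (act v 1 * taft_act_ext n smult act (taft_mult n q (taft_elem v') (taft_elem (1, 0))) 1))"
      using PA_comp[of "(n - 1, 0)" "(1, 0)" 1] n1 by simp
    also have "\<dots> = act (n - 1, 0) 1 * taft_act_ext n smult act (taft_mult n q (taft_elem (n - 1, 0)) (taft_elem (1, 0))) 1"
      using n1 by (simp add: comult_g[OF assms(1)] sum2_elem[OF ka])
    also have "\<dots> = act (n - 1, 0) 1"
      using n1 by (simp add: taft_mult_elem ext_sc[OF ka] PA_00 ka_one[OF ka])
    finally show ?thesis using g_zero act0 n1 by simp
  qed
  have Y: "act (n - 1, 1) 1 = - smult q X"
  proof -
    have "act (n - 1, 1) (act (1, 0) 1) = (\<Sum>v\<in>taft_basis n. \<Sum>v'\<in>taft_basis n.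
             smult (taft_comult n q (n - 1, 1) (v, v'))
               (act v 1 * taft_act_ext n smult act (taft_mult n q (taft_elem v') (taft_elem (1, 0))) 1))"
      using PA_comp[of "(n - 1, 1)" "(1, 0)" 1] n1 by simp
    also have "\<dots> = act (n - 1, 1) 1 * taft_act_ext n smult act (taft_mult n q (taft_elem (n - 1, 0)) (taft_elem (1, 0))) 1
        + act (0, 0) 1 * taft_act_ext n smult act (taft_mult n q (taft_elem (n - 1, 1)) (taft_elem (1, 0))) 1"
      using n1 by (simp only: comult_gix[OF assms(1)]) (simp add: sum2_elem2[OF ka])
    also have "\<dots> = act (n - 1, 1) 1 + smult q X"
      using n1 by (simp add: taft_mult_elem ext_sc[OF ka] PA_00 ka_one[OF ka] X_def)
    finally have "act (n - 1, 1) 1 + smult q X = 0" using g_zero act0 n1 by simp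
    then show ?thesis by (simp add: eq_neg_iff_add_eq_0)
  qed
  have dY: "\<And>b. act (n - 1, 1) b = b * act (n - 1, 1) 1"
  proof -
    fix b
    have "act (n - 1, 1) (b * 1) = (\<Sum>v\<in>taft_basis n. \<Sum>v'\<in>taft_basis n.
             smult (taft_comult n q (n - 1, 1) (v, v')) (act v b * act v' 1))"
      using PA_mul[of "(n - 1, 1)" b 1] n1 by simp
    also have "\<dots> = act (n - 1, 1) b * act (n - 1, 0) 1 + act (0, 0) b * act (n - 1, 1) 1"
      using n1 by (simp only: comult_gix[OF assms(1)]) (simp add: sum2_elem2[OF ka])
    finally show "act (n - 1, 1) b = b * act (n - 1, 1) 1" using gi_one PA_00 by simp
  qed
  have rec: "\<And>i j. i < n \<Longrightarrow> j + 1 < n \<Longrightarrow>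
     smult (q ^ ((i + 1) mod n)) (act (i, j + 1) a) = act ((i + 1) mod n, j) a * act (n - 1, 1) 1 - act (n - 1, 1) 1 * act (i, j) a"
  proof -
    fix i j assume i: "i < n" and j: "j + 1 < n"
    have w: "((i + 1) mod n, j) \<in> taft_basis n" using j n0 by simp
    have "act (n - 1, 1) (act ((i + 1) mod n, j) a) = (\<Sum>v\<in>taft_basis n. \<Sum>v'\<in>taft_basis n.
             smult (taft_comult n q (n - 1, 1) (v, v'))
               (act v 1 * taft_act_ext n smult act (taft_mult n q (taft_elem v') (taft_elem ((i + 1) mod n, j))) a))"
      using PA_comp[OF _ w, of "(n - 1, 1)" a] n1 by simp
    also have "\<dots> = act (n - 1, 1) 1 * taft_act_ext n smult act (taft_mult n q (taft_elem (n - 1, 0)) (taft_elem ((i + 1) mod n, j))) a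
        + act (0, 0) 1 * taft_act_ext n smult act (taft_mult n q (taft_elem (n - 1, 1)) (taft_elem ((i + 1) mod n, j))) a"
      using n1 by (simp only: comult_gix[OF assms(1)]) (simp add: sum2_elem2[OF ka])
    also have "\<dots> = act (n - 1, 1) 1 * act (i, j) a + smult (q ^ ((i + 1) mod n)) (act (i, j + 1) a)"
      using n1 j w by (simp add: taft_mult_elem ext_sc[OF ka] PA_00 ka_one[OF ka] modlem2[OF i])
    finally show "smult (q ^ ((i + 1) mod n)) (act (i, j + 1) a) = act ((i + 1) mod n, j) a * act (n - 1, 1) 1 - act (n - 1, 1) 1 * act (i, j) a"
      using dY[of "act ((i + 1) mod n, j) a"] by (metis add_diff_cancel_left')
  qed
  have rec2: "\<And>i j. i < n \<Longrightarrow> j + 1 < n \<Longrightarrow>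
     act (i, j + 1) a = smult (p ^ i) (X * act (i, j) a - act ((i + 1) mod n, j) a * X)"
  proof -
    fix i j assume i: "i < n" and j: "j + 1 < n"
    define i' where "i' = (i + 1) mod n"
    define D where "D = X * act (i, j) a - act (i', j) a * X"
    have "smult (q ^ i') (act (i, j + 1) a) = act (i', j) a * (- smult q X) - (- smult q X) * act (i, j) a"
      using rec[OF i j] Y unfolding i'_def by simp
    also have "\<dots> = smult q D"
      unfolding D_def ka_diff[OF ka] mult_minus_right mult_minus_left ka_mr[OF ka] ka_ml[OF ka]
      by simp
    finally have e1: "smult (q ^ i') (act (i, j + 1) a) = smult q D" .
    have "act (i, j + 1) a = smult (p ^ i' * q ^ i') (act (i, j + 1) a)"
      using q0 by (simp add: p_def power_inverse ka_one[OF ka])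
    also have "\<dots> = smult (p ^ i' * q) D"
      by (simp only: ka_smult[OF ka, symmetric] e1)
    also have "p ^ i' * q = p ^ i"
    proof -
      have "p ^ i' = p ^ (i + 1)" unfolding i'_def by (rule pow_mod[OF pn])
      then show ?thesis using q0 by (simp add: p_def)
    qed
    finally show "act (i, j + 1) a = smult (p ^ i) (X * act (i, j) a - act ((i + 1) mod n, j) a * X)"
      unfolding D_def i'_def .
  qed
  have main: "\<And>j. j < n \<Longrightarrow> \<forall>i<n. act (i, j) a =
      smult (p ^ (i * j)) (\<Sum>k\<le>j. smult (alpha p j k) (X ^ (j - k) * act ((i + k) mod n, 0) a * X ^ k))"
  proof -
    fix j :: nat
    show "j < n \<Longrightarrow> \<forall>i<n. act (i, j) a =
      smult (p ^ (i * j)) (\<Sum>k\<le>j. smult (alpha p j k) (X ^ (j - k) * act ((i + k) mod n, 0) a * X ^ k))"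
    proof (induction j)
      case 0
      show ?case by (simp add: ka_one[OF ka])
    next
      case (Suc j)
      have jn: "j < n" using Suc.prems by simp
      show ?case
      proof (intro allI impI)
        fix i assume i: "i < n"
        have i': "(i + 1) mod n < n" using n0 by simp
        have "act (i, Suc j) a = smult (p ^ i) (X * act (i, j) a - act ((i + 1) mod n, j) a * X)"
          using rec2[OF i] Suc.prems by simp
        also have "\<dots> = smult (p ^ i) (X * smult (p ^ (i * j)) (\<Sum>k\<le>j. smult (alpha p j k) (X ^ (j - k) * act ((i + k) mod n, 0) a * X ^ k))
      - smult (p ^ (((i + 1) mod n) * j)) (\<Sum>k\<le>j. smult (alpha p j k) (X ^ (j - k) * act (((i + 1) mod n + k) mod n, 0) a * X ^ k)) * X)"
          using Suc.IH[OF jn] i i' by simp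
        also have "\<dots> = smult (p ^ (i * Suc j)) (\<Sum>k\<le>Suc j. smult (alpha p (Suc j) k) (X ^ (Suc j - k) * act ((i + k) mod n, 0) a * X ^ k))"
          by (rule step_alg[OF ka pn n0, where A = "\<lambda>m. act (m, 0) a"])
        finally show "act (i, Suc j) a = smult (p ^ (i * Suc j)) (\<Sum>k\<le>Suc j. smult (alpha p (Suc j) k) (X ^ (Suc j - k) * act ((i + k) mod n, 0) a * X ^ k))" .
      qed
    qed
  qed
  have fin: "act (i, j) a = smult (p ^ (i * j)) (\<Sum>k\<le>j. smult (alpha p j k) (X ^ (j - k) * act ((i + k) mod n, 0) a * X ^ k))"
    using main[OF assms(7)] assms(6) by blast
  then show ?thesis by (simp only: alpha_def p_def X_def)
qed

end
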